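(* Let $\mathcal{A}$ be an abelian group. Let $M_{12}(p_1,p_2)$ be the graph with vertices $v_1,\dots,v_5$ and edges $v_1v_2$, $v_2v_3$, $v_2v_4$, $v_2v_5$, $v_3v_4$, $v_4v_5$, together with $p_1\ge 1$ pendant vertices adjacent to $v_1$ and $p_2\ge0$ pendant vertices adjacent to $v_2$. Then $M_{12}(p_1,p_2)$ is $\mathcal{A}$-vertex magic if and only if $p_2=0$, $\mathcal{A}$ contains an involution $h$, and there exist $g_1,g_2\in\mathcal{A}\setminus\{0\}$ with $g_1+g_2=h$.
   Context: An involution is an element of order $2$. A map $\ell:V(G)\to\mathcal{A}\setminus\{0\}$ is an $\mathcal{A}$-vertex magic labeling if there is $\mu\in\mathcal{A}$ with $\sum_{u\in N(v)}\ell(u)=\mu$ for every vertex $v$; $G$ is $\mathcal{A}$-vertex magic if such a labeling exists. A pendant vertex has degree $1$. *)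

theory Defs
  imports Main
begin

(* A finite simple graph is given by a vertex set V and a symmetric, irreflexive
   adjacency relation E.  The open neighbourhood of v is {u \<in> V. E v u}. *)

definition nbhd :: "'v set \<Rightarrow> ('v \<Rightarrow> 'v \<Rightarrow> bool) \<Rightarrow> 'v \<Rightarrow> 'v set" where
  "nbhd V E v = {u \<in> V. E v u}"

definition vertex_magic_labeling ::
  "'v set \<Rightarrow> ('v \<Rightarrow> 'v \<Rightarrow> bool) \<Rightarrow> ('v \<Rightarrow> 'a::ab_group_add) \<Rightarrow> bool" where
  "vertex_magic_labeling V E l \<longleftrightarrow>
     (\<forall>v\<in>V. l v \<noteq> 0) \<and> (\<exists>\<mu>. \<forall>v\<in>V. (\<Sum>u\<in>nbhd V E v. l u) = \<mu>)"

definition vertex_magic ::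
  "'a::ab_group_add itself \<Rightarrow> 'v set \<Rightarrow> ('v \<Rightarrow> 'v \<Rightarrow> bool) \<Rightarrow> bool" where
  "vertex_magic _ V E \<longleftrightarrow> (\<exists>l :: 'v \<Rightarrow> 'a. vertex_magic_labeling V E l)"

definition involution :: "'a::ab_group_add \<Rightarrow> bool" where
  "involution h \<longleftrightarrow> h \<noteq> 0 \<and> h + h = 0"

(* Vertices of M_12(p1,p2): core vertices Core 1..Core 5, pendants P1 j (j < p1)
   attached to Core 1 and pendants P2 j (j < p2) attached to Core 2. *)
datatype mvtx = Core nat | P1 nat | P2 nat

definition M12_V :: "nat \<Rightarrow> nat \<Rightarrow> mvtx set" where
  "M12_V p1 p2 = Core ` {1..5} \<union> P1 ` {..<p1} \<union> P2 ` {..<p2}"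

definition M12_base_edge :: "mvtx \<Rightarrow> mvtx \<Rightarrow> bool" where
  "M12_base_edge x y \<longleftrightarrow>
     (x, y) \<in> {(Core 1, Core 2), (Core 2, Core 3), (Core 2, Core 4), (Core 2, Core 5),
               (Core 3, Core 4), (Core 4, Core 5)}
     \<or> (\<exists>j. x = Core 1 \<and> y = P1 j)
     \<or> (\<exists>j. x = Core 2 \<and> y = P2 j)"

definition M12_E :: "mvtx \<Rightarrow> mvtx \<Rightarrow> bool" where
  "M12_E x y \<longleftrightarrow> M12_base_edge x y \<or> M12_base_edge y x"

end

theory Submission
  imports Defs
begin

lemma V_mem: "Core k \<in> M12_V p1 p2 \<longleftrightarrow> k \<in> {1..5}"
  "P1 j \<in> M12_V p1 p2 \<longleftrightarrow> j < p1" "P2 j \<in> M12_V p1 p2 \<longleftrightarrow> j < p2"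
  by (auto simp: M12_V_def)

lemma nb1: "nbhd (M12_V p1 p2) M12_E (Core 1) = insert (Core 2) (P1 ` {..<p1})"
  by (auto simp: nbhd_def M12_V_def M12_E_def M12_base_edge_def)
lemma nb2: "nbhd (M12_V p1 p2) M12_E (Core 2) = {Core 1, Core 3, Core 4, Core 5} \<union> P2 ` {..<p2}"
  by (auto simp: nbhd_def M12_V_def M12_E_def M12_base_edge_def)
lemma nb3: "nbhd (M12_V p1 p2) M12_E (Core 3) = {Core 2, Core 4}"
  by (auto simp: nbhd_def M12_V_def M12_E_def M12_base_edge_def)
lemma nb4: "nbhd (M12_V p1 p2) M12_E (Core 4) = {Core 2, Core 3, Core 5}"
  by (auto simp: nbhd_def M12_V_def M12_E_def M12_base_edge_def)
lemma nb5: "nbhd (M12_V p1 p2) M12_E (Core 5) = {Core 2, Core 4}"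
  by (auto simp: nbhd_def M12_V_def M12_E_def M12_base_edge_def)
lemma nbP1: "nbhd (M12_V p1 p2) M12_E (P1 j) = {Core 1}"
  by (auto simp: nbhd_def M12_V_def M12_E_def M12_base_edge_def)
lemma nbP2: "nbhd (M12_V p1 p2) M12_E (P2 j) = {Core 2}"
  by (auto simp: nbhd_def M12_V_def M12_E_def M12_base_edge_def)

lemma sum1: "(\<Sum>u\<in>insert (Core 2) (P1 ` {..<p1}). l u) = l (Core 2) + (\<Sum>j<p1. l (P1 j))"
  by (simp add: sum.reindex inj_on_def image_iff)

lemma sum2: "(\<Sum>u\<in>{Core 1, Core 3, Core 4, Core 5} \<union> P2 ` {..<p2}. l u)
   = l (Core 1) + l (Core 3) + l (Core 4) + l (Core 5) + (\<Sum>j<p2. l (P2 j))"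
  by (subst sum.union_disjoint) (auto simp: sum.reindex inj_on_def add.assoc)

lemma sum_h: "(h::'a::ab_group_add) + h = 0 \<Longrightarrow> (\<Sum>j<(n::nat). h) = (if even n then 0 else h)"
proof (induction n)
  case 0 then show ?case by simp
next
  case (Suc n)
  have "(\<Sum>j<Suc n. h) = (\<Sum>j<n. h) + h" by simp
  then show ?case using Suc by (cases "even n") auto
qed

lemma sum_g: "(h::'a::ab_group_add) + h = 0 \<Longrightarrow>
  (\<Sum>j<(n::nat)+2. (if j = 0 then g1 else if j = 1 then g2 else h)) = g1 + g2 + (if even n then 0 else h)"
proof (induction n)
  case 0
  then show ?case by (simp add: numeral_2_eq_2)
next
  case (Suc n)
  have "(\<Sum>j<Suc n+2. (if j = 0 then g1 else if j = 1 then g2 else h)) =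
     (\<Sum>j<(n::nat)+2. (if j = 0 then g1 else if j = 1 then g2 else h)) + h" by simp
  also have "\<dots> = g1 + g2 + (if even n then 0 else h) + h" using Suc by simp
  finally show ?case using Suc.prems by (cases "even n") (auto simp: add.assoc)
qed

theorem proposition4p10:
  fixes p1 p2 :: nat
  assumes "p1 \<ge> 1"
  shows "vertex_magic TYPE('a::ab_group_add) (M12_V p1 p2) M12_E \<longleftrightarrow>
           p2 = 0 \<and> (\<exists>h::'a. involution h \<and>
              (\<exists>g1 g2::'a. g1 \<noteq> 0 \<and> g2 \<noteq> 0 \<and> g1 + g2 = h))"
proof
  assume "vertex_magic TYPE('a::ab_group_add) (M12_V p1 p2) M12_E"
  then obtain l :: "mvtx \<Rightarrow> 'a" and \<mu> where nz: "\<forall>v\<in>M12_V p1 p2. l v \<noteq> 0"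
    and mu: "\<forall>v\<in>M12_V p1 p2. (\<Sum>u\<in>nbhd (M12_V p1 p2) M12_E v. l u) = \<mu>"
    unfolding vertex_magic_def vertex_magic_labeling_def by blast
  have l1: "l (Core 1) = \<mu>" using mu[rule_format, of "P1 0"] assms by (simp add: V_mem nbP1)
  have c3: "l (Core 2) + l (Core 4) = \<mu>" using mu[rule_format, of "Core 3"] by (simp add: V_mem nb3)
  have c4: "l (Core 2) + (l (Core 3) + l (Core 5)) = \<mu>" using mu[rule_format, of "Core 4"] by (simp add: V_mem nb4)
  have n3: "l (Core 3) \<noteq> 0" "l (Core 4) \<noteq> 0" "l (Core 5) \<noteq> 0"
    using nz by (auto simp: V_mem)
  have p2: "p2 = 0"
  proof (rule ccontr)
    assume "p2 \<noteq> 0"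
    then have "l (Core 2) = \<mu>" using mu[rule_format, of "P2 0"] by (simp add: V_mem nbP2)
    then show False using c3 n3 by simp
  qed
  have c2: "l (Core 1) + l (Core 3) + l (Core 4) + l (Core 5) = \<mu>"
    using mu[rule_format, of "Core 2"] p2 by (simp add: V_mem nb2 sum2 add.assoc)
  have e1: "l (Core 3) + l (Core 5) = l (Core 4)" using c3 c4
    by (metis add_left_cancel)
  have e0: "l (Core 3) + l (Core 4) + l (Core 5) = 0" using c2 l1
    by (metis add.assoc add_cancel_right_right)
  have e2: "l (Core 4) + l (Core 4) = 0" using e0 e1
    by (metis add.commute add.left_commute)
  show "p2 = 0 \<and> (\<exists>h::'a. involution h \<and>
              (\<exists>g1 g2::'a. g1 \<noteq> 0 \<and> g2 \<noteq> 0 \<and> g1 + g2 = h))"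
    using p2 e1 e2 n3 unfolding involution_def by blast
next
  assume "p2 = 0 \<and> (\<exists>h::'a. involution h \<and>
              (\<exists>g1 g2::'a. g1 \<noteq> 0 \<and> g2 \<noteq> 0 \<and> g1 + g2 = h))"
  then obtain h g1 g2 :: 'a where p2: "p2 = 0" and h: "h \<noteq> 0" "h + h = 0"
    and g: "g1 \<noteq> 0" "g2 \<noteq> 0" "g1 + g2 = h"
    unfolding involution_def by blast
  have mh: "- h = h" using h(2) by (simp add: add_eq_0_iff)
  have g1h: "g1 \<noteq> h" using g by auto
  have l1nz: "g1 + h \<noteq> 0" using g1h mh by (metis add_eq_0_iff minus_minus)
  define pl :: "nat \<Rightarrow> 'a" where "pl j = (if odd p1 then h else if j = 0 then g1 else if j = 1 then g2 else h)" for j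
  have plnz: "pl j \<noteq> 0" for j using h g by (auto simp: pl_def)
  have plsum: "(\<Sum>j<p1. pl j) = h"
  proof (cases "odd p1")
    case True
    then show ?thesis using sum_h[OF h(2), of p1] by (simp add: pl_def)
  next
    case False
    have "p1 \<noteq> 1" using False by auto
    then have "p1 \<ge> 2" using assms by linarith
    define n where "n = p1 - 2"
    have nn: "p1 = n + 2" "even n" using False \<open>p1 \<ge> 2\<close> by (auto simp: n_def)
    have A: "(\<Sum>j<p1. pl j) = (\<Sum>j<n+2. (if j = 0 then g1 else if j = 1 then g2 else h))"
      unfolding pl_def using False nn(1) by (simp only: if_False)
    have C: "(\<Sum>j<n+2. (if j = 0 then g1 else if j = 1 then g2 else h)) = g1 + g2 + (if even n then 0 else h)"
      by (rule sum_g[OF h(2)])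
    have D: "(if even n then 0 else h) = 0" using nn(2) by (simp only: if_True)
    show ?thesis using A C D g(3) by (simp only: add_0_right)
  qed
  define l where "l v = (case v of Core k \<Rightarrow> (if k = 1 then g1 + h else if k = 2 then g1
      else if k = 3 then g1 else if k = 4 then h else g2) | P1 j \<Rightarrow> pl j | P2 j \<Rightarrow> h)" for v
  have "vertex_magic_labeling (M12_V p1 p2) M12_E l"
    unfolding vertex_magic_labeling_def
  proof (intro conjI exI[of _ "g1 + h"] ballI)
    fix v assume "v \<in> M12_V p1 p2"
    then show "l v \<noteq> 0" using h(1) g(1,2) l1nz plnz by (auto simp: M12_V_def l_def split: if_splits)
  next
    fix v assume v: "v \<in> M12_V p1 p2"
    then consider "v = Core 1" | "v = Core 2" | "v = Core 3" | "v = Core 4" | "v = Core 5"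
      | j where "v = P1 j"
    proof -
      have five: "{1..5::nat} = {1,2,3,4,5}" by auto
      show ?thesis using v p2 that unfolding M12_V_def five by blast
    qed
    then show "(\<Sum>u\<in>nbhd (M12_V p1 p2) M12_E v. l u) = g1 + h"
    proof cases
      case 1 then show ?thesis using plsum by (simp only: 1 nb1 sum1) (simp add: l_def)
    next
      case 2 then show ?thesis using p2 g h by (simp only: 2 nb2 sum2) (simp add: l_def algebra_simps)
    next
      case 3 then show ?thesis by (simp only: 3 nb3) (simp add: l_def)
    next
      case 4 then show ?thesis using g by (simp only: 4 nb4) (simp add: l_def algebra_simps)
    next
      case 5 then show ?thesis by (simp only: 5 nb5) (simp add: l_def)
    next
      case 6 then show ?thesis by (simp only: 6 nbP1) (simp add: l_def)
    qed
  qed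
  then show "vertex_magic TYPE('a::ab_group_add) (M12_V p1 p2) M12_E"
    unfolding vertex_magic_def by blast
qed

end
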